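(* Let $H_1,H_2$ be complex Hilbert spaces. The set of densely defined closed minimum attaining operators from $H_1$ to $H_2$ is dense, with respect to the gap topology, in the set of all densely defined closed operators from $H_1$ to $H_2$.
   Context: Hilbert spaces are complex and infinite dimensional. For a densely defined closed operator $A$ with domain $D(A)$, $m(A)=\inf\{\|Ax\|: x\in D(A),\ \|x\|=1\}$, and $A$ is minimum attaining if there exists $x_0\in D(A)$, $\|x_0\|=1$, with $\|Ax_0\|=m(A)$. The gap topology is the topology induced by the metric $\theta(A,B)=\|P_{G(A)}-P_{G(B)}\|$, where $G(A)=\{(Ax,x):x\in D(A)\}$ is the (closed) graph and $P_M$ the orthogonal projection onto $M$. *)

theory Defs
  imports "HOL-Analysis.Analysis"
begin

text \<open>The distribution has no complex Hilbert spaces, so we introduce them as a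
type class: a (real) normed vector space carrying a complex scalar multiplication
extending the real one, and a complex inner product (linear in the second argument,
conjugate symmetric) inducing the norm.\<close>

class complex_inner = real_normed_vector +
  fixes scaleC :: "complex \<Rightarrow> 'a \<Rightarrow> 'a"
    and cinner :: "'a \<Rightarrow> 'a \<Rightarrow> complex"
  assumes scaleC_add_right: "scaleC a (x + y) = scaleC a x + scaleC a y"
    and scaleC_add_left: "scaleC (a + b) x = scaleC a x + scaleC b x"
    and scaleC_scaleC: "scaleC a (scaleC b x) = scaleC (a * b) x"
    and scaleC_one: "scaleC 1 x = x"
    and scaleR_scaleC: "scaleR r x = scaleC (complex_of_real r) x"
    and cinner_add_right: "cinner x (y + z) = cinner x y + cinner x z"
    and cinner_scaleC_right: "cinner x (scaleC a y) = a * cinner x y"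
    and cinner_commute: "cinner y x = cnj (cinner x y)"
    and cinner_self_norm: "cinner x x = complex_of_real ((norm x)\<^sup>2)"

class chilbert_space = complex_inner + complete_space

definition csubspace :: "'a::complex_inner set \<Rightarrow> bool" where
  "csubspace S \<longleftrightarrow> 0 \<in> S \<and> (\<forall>x\<in>S. \<forall>y\<in>S. x + y \<in> S) \<and> (\<forall>c. \<forall>x\<in>S. scaleC c x \<in> S)"

definition cspan :: "'a::complex_inner set \<Rightarrow> 'a set" where
  "cspan S = {(\<Sum>x\<in>F. scaleC (c x) x) | F c. finite F \<and> F \<subseteq> S}"

definition infinite_dimensional :: "'a::complex_inner itself \<Rightarrow> bool" where
  "infinite_dimensional _ \<longleftrightarrow> (\<forall>S::'a set. finite S \<longrightarrow> cspan S \<noteq> UNIV)"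

text \<open>An (unbounded) operator from H1 to H2 is a pair of a domain D (a complex
subspace of H1) and a map A that is complex linear on D; values outside D are
irrelevant (everything below depends only on the graph).\<close>

definition is_operator :: "'a::complex_inner set \<Rightarrow> ('a \<Rightarrow> 'b::complex_inner) \<Rightarrow> bool" where
  "is_operator D A \<longleftrightarrow> csubspace D \<and>
     (\<forall>x\<in>D. \<forall>y\<in>D. A (x + y) = A x + A y) \<and>
     (\<forall>c. \<forall>x\<in>D. A (scaleC c x) = scaleC c (A x))"

definition graph :: "'a set \<Rightarrow> ('a \<Rightarrow> 'b) \<Rightarrow> ('b \<times> 'a) set" where
  "graph D A = {(A x, x) | x. x \<in> D}"

definition densely_defined_closed :: "'a::complex_inner set \<Rightarrow> ('a \<Rightarrow> 'b::complex_inner) \<Rightarrow> bool" where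
  "densely_defined_closed D A \<longleftrightarrow> is_operator D A \<and> closure D = UNIV \<and> closed (graph D A)"

definition min_modulus :: "'a::complex_inner set \<Rightarrow> ('a \<Rightarrow> 'b::complex_inner) \<Rightarrow> real" where
  "min_modulus D A = Inf {norm (A x) | x. x \<in> D \<and> norm x = 1}"

definition minimum_attaining :: "'a::complex_inner set \<Rightarrow> ('a \<Rightarrow> 'b::complex_inner) \<Rightarrow> bool" where
  "minimum_attaining D A \<longleftrightarrow> (\<exists>x0\<in>D. norm x0 = 1 \<and> norm (A x0) = min_modulus D A)"

text \<open>Inner product of the direct sum H2 (+) H1 (its norm is the product norm of the
library, sqrt (norm u ^ 2 + norm v ^ 2)).\<close>
definition pinner :: "('b::complex_inner \<times> 'a::complex_inner) \<Rightarrow> ('b \<times> 'a) \<Rightarrow> complex" where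
  "pinner p q = cinner (fst p) (fst q) + cinner (snd p) (snd q)"

definition orth_proj :: "('b::complex_inner \<times> 'a::complex_inner) set \<Rightarrow> ('b \<times> 'a) \<Rightarrow> ('b \<times> 'a)" where
  "orth_proj M z = (THE y. y \<in> M \<and> (\<forall>m\<in>M. pinner (z - y) m = 0))"

definition gap :: "'a::complex_inner set \<Rightarrow> ('a \<Rightarrow> 'b::complex_inner) \<Rightarrow> 'a set \<Rightarrow> ('a \<Rightarrow> 'b) \<Rightarrow> real" where
  "gap D A D' A' = onorm (\<lambda>z. orth_proj (graph D A) z - orth_proj (graph D' A') z)"

end

theory Submission
  imports Defs
begin


lemma cinner_add_left: "cinner (x + y) (z::'a::complex_inner) = cinner x z + cinner y z"
  by (metis cinner_commute cinner_add_right complex_cnj_add)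
lemma cinner_scaleC_left: "cinner (scaleC a x) (y::'a::complex_inner) = cnj a * cinner x y"
  by (metis cinner_commute cinner_scaleC_right complex_cnj_mult complex_cnj_cnj)
lemma scaleC_zero_left[simp]: "scaleC 0 (x::'a::complex_inner) = 0"
  by (metis scaleR_scaleC scaleR_zero_left of_real_0)
lemma scaleC_minus1: "scaleC (-1) (x::'a::complex_inner) = - x"
  by (metis scaleR_scaleC scaleR_minus1_left of_real_1 of_real_minus)
lemma scaleC_zero_right[simp]: "scaleC a (0::'a::complex_inner) = 0"
  by (metis scaleC_add_right add_cancel_right_right add_0)
lemma scaleC_minus_right: "scaleC a (- x::'a::complex_inner) = - scaleC a x"
  by (metis scaleC_add_right add.right_inverse scaleC_zero_right add_eq_0_iff)
lemma scaleC_diff_right: "scaleC a (x - y::'a::complex_inner) = scaleC a x - scaleC a y"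
  by (metis scaleC_add_right scaleC_minus_right diff_conv_add_uminus)
lemma scaleC_minus_left: "scaleC (-a) (x::'a::complex_inner) = - scaleC a x"
  by (metis scaleC_scaleC scaleC_minus1 mult_minus1 )
lemma scaleC_diff_left: "scaleC (a - b) (x::'a::complex_inner) = scaleC a x - scaleC b x"
  by (metis scaleC_add_left scaleC_minus_left diff_conv_add_uminus)
lemma cinner_zero_right[simp]: "cinner x (0::'a::complex_inner) = 0"
  by (metis cinner_add_right add_cancel_right_right add_0)
lemma cinner_zero_left[simp]: "cinner (0::'a::complex_inner) x = 0"
  by (metis cinner_commute cinner_zero_right complex_cnj_zero)
lemma cinner_minus_right: "cinner x (- y::'a::complex_inner) = - cinner x y"
  by (metis cinner_add_right add.right_inverse cinner_zero_right add_eq_0_iff)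
lemma cinner_diff_right: "cinner x (y - z::'a::complex_inner) = cinner x y - cinner x z"
  by (metis cinner_add_right cinner_minus_right diff_conv_add_uminus)
lemma cinner_minus_left: "cinner (- x) (y::'a::complex_inner) = - cinner x y"
  by (metis cinner_commute cinner_minus_right complex_cnj_minus)
lemma cinner_diff_left: "cinner (x - y) (z::'a::complex_inner) = cinner x z - cinner y z"
  by (metis cinner_add_left cinner_minus_left diff_conv_add_uminus)
lemma cinner_self_Re: "Re (cinner x (x::'a::complex_inner)) = (norm x)^2"
  by (simp add: cinner_self_norm)
lemma cinner_self_Im: "Im (cinner x (x::'a::complex_inner)) = 0"
  by (simp add: cinner_self_norm)
lemma norm_add_sq: "(norm (x + y::'a::complex_inner))^2 = (norm x)^2 + (norm y)^2 + 2 * Re (cinner x y)"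
proof -
  have "cinner (x+y) (x+y) = cinner x x + cinner x y + cnj (cinner x y) + cinner y y"
    by (simp add: cinner_add_left cinner_add_right cinner_commute[of x y])
  then have "Re (cinner (x+y) (x+y)) = Re (cinner x x) + 2 * Re (cinner x y) + Re (cinner y y)"
    by simp
  then show ?thesis by (simp add: cinner_self_Re)
qed
lemma norm_diff_sq: "(norm (x - y::'a::complex_inner))^2 = (norm x)^2 + (norm y)^2 - 2 * Re (cinner x y)"
  using norm_add_sq[of x "-y"] by (simp add: cinner_minus_right)
lemma norm_scaleC: "norm (scaleC a (x::'a::complex_inner)) = cmod a * norm x"
proof -
  have "cinner (scaleC a x) (scaleC a x) = (cnj a * a) * cinner x x"
    by (simp add: cinner_scaleC_left cinner_scaleC_right)
  then have "(norm (scaleC a x))^2 = (cmod a)^2 * (norm x)^2"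
  proof -
    have e1: "cnj a * a = complex_of_real ((cmod a)^2)"
      by (subst mult.commute) (rule complex_norm_square[symmetric])
    have "complex_of_real ((norm (scaleC a x))^2) = cinner (scaleC a x) (scaleC a x)"
      by (simp only: cinner_self_norm)
    also have "\<dots> = (cnj a * a) * cinner x x" by fact
    also have "\<dots> = complex_of_real ((cmod a)^2) * complex_of_real ((norm x)^2)"
      by (simp only: e1 cinner_self_norm)
    also have "\<dots> = complex_of_real ((cmod a)^2 * (norm x)^2)" by simp
    finally have "complex_of_real ((norm (scaleC a x))^2) = complex_of_real ((cmod a)^2 * (norm x)^2)" .
    then show ?thesis by (simp only: of_real_eq_iff)
  qed
  then show ?thesis
    by (metis norm_ge_zero power_mult_distrib power2_eq_imp_eq zero_le_mult_iff)
qed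
lemma cauchy_schwarz: "cmod (cinner x (y::'a::complex_inner)) \<le> norm x * norm y"
proof (cases "cinner x y = 0")
  case True then show ?thesis by simp
next
  case False
  define b where "b = cinner x y"
  have bp: "cmod b > 0" using False b_def by simp
  then have ny: "norm y > 0" using False by (auto simp: b_def)
  define k where "k = cmod b / (norm y)^2"
  define t where "t = complex_of_real k * cnj b / complex_of_real (cmod b)"
  have ct: "cmod t = k" unfolding t_def k_def using bp by (simp add: norm_divide norm_mult norm_power)
  have cb: "cnj b * b = complex_of_real (cmod b * cmod b)"
    by (subst mult.commute, subst complex_norm_square[symmetric]) (simp add: power2_eq_square)
  have tb: "t * b = complex_of_real (k * cmod b)"
  proof -
    have "t * b = complex_of_real k * (cnj b * b) / complex_of_real (cmod b)"
      unfolding t_def by (simp add: ac_simps)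
    also have "\<dots> = complex_of_real (k * (cmod b * cmod b) / cmod b)" by (simp add: cb)
    also have "k * (cmod b * cmod b) / cmod b = k * cmod b" using bp by simp
    finally show ?thesis .
  qed
  have "0 \<le> (norm (x - scaleC t y))^2" by simp
  also have "\<dots> = (norm x)^2 + k^2 * (norm y)^2 - 2 * (k * cmod b)"
  proof -
    have "cinner x (scaleC t y) = complex_of_real (k * cmod b)"
      by (simp only: cinner_scaleC_right b_def[symmetric] tb)
    moreover have "(norm (scaleC t y))^2 = k^2 * (norm y)^2"
      by (simp only: norm_scaleC ct power_mult_distrib)
    ultimately show ?thesis by (simp only: norm_diff_sq Re_complex_of_real)
  qed
  also have "k^2 * (norm y)^2 = (cmod b)^2 / (norm y)^2"
    unfolding k_def using ny by (simp add: power2_eq_square)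
  also have "k * cmod b = (cmod b)^2 / (norm y)^2"
    unfolding k_def by (simp add: power2_eq_square)
  finally have "(cmod b)^2 / (norm y)^2 \<le> (norm x)^2" by simp
  then have "(cmod b)^2 \<le> (norm x)^2 * (norm y)^2"
    using ny by (simp add: divide_le_eq)
  then have "(cmod b)^2 \<le> (norm x * norm y)^2" by (simp add: power_mult_distrib)
  then show ?thesis unfolding b_def by (rule power2_le_imp_le) simp
qed
lemma pythag: "cinner x (y::'a::complex_inner) = 0 \<Longrightarrow> (norm (x + y))^2 = (norm x)^2 + (norm y)^2"
  by (simp add: norm_add_sq)
lemma scaleC_real: "scaleC (complex_of_real r) (x::'a::complex_inner) = scaleR r x"
  by (simp add: scaleR_scaleC)



instantiation prod :: (complex_inner, complex_inner) complex_inner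
begin
definition scaleC_prod_def: "scaleC c p = (scaleC c (fst p), scaleC c (snd p))"
definition cinner_prod_def: "cinner p q = cinner (fst p) (fst q) + cinner (snd p) (snd q)"
instance
proof
  fix a b :: complex and x y z :: "'a \<times> 'b" and r :: real
  show "scaleC a (x + y) = scaleC a x + scaleC a y"
    by (simp add: scaleC_prod_def scaleC_add_right)
  show "scaleC (a + b) x = scaleC a x + scaleC b x"
    by (simp add: scaleC_prod_def scaleC_add_left)
  show "scaleC a (scaleC b x) = scaleC (a * b) x"
    by (simp add: scaleC_prod_def scaleC_scaleC)
  show "scaleC 1 x = x"
    by (simp add: scaleC_prod_def scaleC_one)
  show "scaleR r x = scaleC (complex_of_real r) x"
    by (simp add: scaleC_prod_def scaleR_prod_def scaleR_scaleC)
  show "cinner x (y + z) = cinner x y + cinner x z"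
    by (simp add: cinner_prod_def cinner_add_right)
  show "cinner x (scaleC a y) = a * cinner x y"
    by (simp add: cinner_prod_def scaleC_prod_def cinner_scaleC_right distrib_left)
  show "cinner y x = cnj (cinner x y)"
    by (simp add: cinner_prod_def cinner_commute[of "fst x"] cinner_commute[of "snd x"])
  show "cinner x x = complex_of_real ((norm x)\<^sup>2)"
    by (simp add: cinner_prod_def norm_prod_def cinner_self_norm)
qed
end

instance prod :: (chilbert_space, chilbert_space) chilbert_space ..

lemma pinner_eq: "pinner p q = cinner p q"
  by (simp add: pinner_def cinner_prod_def)

lemma csubspace_diff: "csubspace M \<Longrightarrow> x \<in> M \<Longrightarrow> y \<in> M \<Longrightarrow> x - y \<in> M"
  unfolding csubspace_def by (metis diff_conv_add_uminus scaleC_minus1)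
lemma csubspace_scaleR: "csubspace M \<Longrightarrow> x \<in> M \<Longrightarrow> scaleR r x \<in> M"
  unfolding csubspace_def by (simp add: scaleR_scaleC)

lemma parallelogram: "(norm (a + b::'a::complex_inner))^2 + (norm (a - b))^2 = 2 * (norm a)^2 + 2 * (norm b)^2"
  by (simp add: norm_add_sq norm_diff_sq)

lemma min_dist_exists:
  fixes M :: "'a::chilbert_space set"
  assumes sub: "csubspace M" and cl: "closed M"
  shows "\<exists>y\<in>M. \<forall>m\<in>M. norm (z - y) \<le> norm (z - m)"
proof -
  define S where "S = {norm (z - m) | m. m \<in> M}"
  define d where "d = Inf S"
  have M0: "0 \<in> M" using sub by (simp add: csubspace_def)
  have Sne: "S \<noteq> {}" using M0 by (auto simp: S_def)
  have Sbdd: "bdd_below S" by (auto simp: S_def intro!: bdd_belowI[of _ 0])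
  have dle: "d \<le> norm (z - m)" if "m \<in> M" for m
    unfolding d_def by (rule cInf_lower) (use that Sbdd in \<open>auto simp: S_def\<close>)
  have d0: "0 \<le> d" unfolding d_def by (rule cInf_greatest[OF Sne]) (auto simp: S_def)
  have "\<exists>m\<in>M. (norm (z - m))^2 < d^2 + 1 / real (Suc n)" for n
  proof -
    have "d < sqrt (d^2 + 1 / real (Suc n))"
      using d0 by (metis real_sqrt_abs real_sqrt_less_iff abs_of_nonneg less_add_same_cancel1
          of_nat_0_less_iff zero_less_Suc divide_pos_pos zero_less_one)
    then obtain s where "s \<in> S" "s < sqrt (d^2 + 1 / real (Suc n))"
      using cInf_lessD[OF Sne] unfolding d_def by blast
    then obtain m where m: "m \<in> M" "norm (z - m) < sqrt (d^2 + 1 / real (Suc n))"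
      by (auto simp: S_def)
    then have "(norm (z - m))^2 < d^2 + 1 / real (Suc n)"
      by (metis norm_ge_zero real_sqrt_less_iff real_sqrt_abs abs_of_nonneg)
    with m show ?thesis by blast
  qed
  then obtain f where f: "\<And>n. f n \<in> M" "\<And>n. (norm (z - f n))^2 < d^2 + 1 / real (Suc n)"
    by metis
  have key: "(norm (f i - f j))^2 \<le> 2 / real (Suc i) + 2 / real (Suc j)" for i j
  proof -
    have mid: "scaleR (1/2) (f i + f j) \<in> M"
      using f(1) sub by (simp add: csubspace_scaleR csubspace_def)
    have "(z - f i) + (z - f j) = scaleR 2 (z - scaleR (1/2) (f i + f j))"
      by (simp add: algebra_simps scaleR_2)
    then have "norm ((z - f i) + (z - f j)) = 2 * norm (z - scaleR (1/2) (f i + f j))" by simp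
    moreover have "d \<le> norm (z - scaleR (1/2) (f i + f j))" using dle[OF mid] .
    ultimately have "(2*d)^2 \<le> (norm ((z - f i) + (z - f j)))^2"
      using d0 by (simp add: power_mono)
    moreover have "(z - f i) - (z - f j) = f j - f i" by simp
    moreover note parallelogram[of "z - f i" "z - f j"] f(2)[of i] f(2)[of j]
    moreover have "norm (f j - f i) = norm (f i - f j)" by (simp add: norm_minus_commute)
    ultimately show ?thesis by (simp add: power_mult_distrib)
  qed
  have "Cauchy f"
    unfolding Cauchy_def
  proof (intro allI impI)
    fix e :: real assume "e > 0"
    obtain N :: nat where N: "4 / e^2 < real N" using reals_Archimedean2 by blast
    show "\<exists>N. \<forall>m\<ge>N. \<forall>n\<ge>N. dist (f m) (f n) < e"
    proof (intro exI allI impI)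
      fix i j assume ij: "N \<le> i" "N \<le> j"
      have "2 / real (Suc i) < e^2/2"
      proof -
        have "4 / e^2 < real (Suc i)" using N ij by linarith
        then show ?thesis using \<open>e>0\<close> by (simp add: field_simps)
      qed
      moreover have "2 / real (Suc j) < e^2/2"
      proof -
        have "4 / e^2 < real (Suc j)" using N ij by linarith
        then show ?thesis using \<open>e>0\<close> by (simp add: field_simps)
      qed
      ultimately have "(norm (f i - f j))^2 < e^2" using key[of i j] by linarith
      then have "norm (f i - f j) < e" using \<open>e>0\<close>
        by (meson less_le power_less_imp_less_base)
      then show "dist (f i) (f j) < e" by (simp add: dist_norm)
    qed
  qed
  then obtain y where y: "f \<longlonglongrightarrow> y" using Cauchy_convergent convergent_def by blast
  have yM: "y \<in> M" using cl y f(1) closed_sequential_limits by blast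
  have lim1: "(\<lambda>n. (norm (z - f n))^2) \<longlonglongrightarrow> (norm (z - y))^2"
    by (intro tendsto_intros y)
  have lim2: "(\<lambda>n. d^2 + 1 / real (Suc n)) \<longlonglongrightarrow> d^2 + 0"
    by (intro tendsto_intros LIMSEQ_inverse_real_of_nat[unfolded inverse_eq_divide])
  have "(norm (z - y))^2 \<le> d^2 + 0"
  proof (rule LIMSEQ_le[OF lim1 lim2])
    show "\<exists>N. \<forall>n\<ge>N. (norm (z - f n))^2 \<le> d^2 + 1 / real (Suc n)"
      using f(2) less_imp_le by blast
  qed
  then have "(norm (z - y))^2 \<le> d^2" by simp
  then have "norm (z - y) \<le> d" by (rule power2_le_imp_le[OF _ d0])
  then show ?thesis using yM dle by (meson order_trans)
qed

lemma proj_exists: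
  fixes M :: "'a::chilbert_space set"
  assumes sub: "csubspace M" and cl: "closed M"
  shows "\<exists>y\<in>M. \<forall>m\<in>M. cinner (z - y) m = 0"
proof -
  obtain y where yM: "y \<in> M" and ymin: "\<And>m. m \<in> M \<Longrightarrow> norm (z - y) \<le> norm (z - m)"
    using min_dist_exists[OF sub cl] by blast
  have "cinner (z - y) m = 0" if mM: "m \<in> M" for m
  proof (rule ccontr)
    assume bne: "cinner (z - y) m \<noteq> 0"
    define w where "w = z - y"
    define b where "b = cinner w m"
    define k where "k = 1 / ((norm m)^2 + 1)"
    have kp: "k > 0" unfolding k_def by (simp add: add_nonneg_pos)
    have km: "k * (norm m)^2 < 2"
    proof -
      have "k * (norm m)^2 = (norm m)^2 / ((norm m)^2 + 1)" unfolding k_def by simp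
      also have "\<dots> < 1" by (simp add: add_nonneg_pos)
      finally show ?thesis by simp
    qed
    define t where "t = complex_of_real k * cnj b"
    have ym: "y + scaleC t m \<in> M" using sub yM mM by (simp add: csubspace_def)
    have e1: "cinner w (scaleC t m) = complex_of_real (k * (cmod b)^2)"
    proof -
      have "cinner w (scaleC t m) = complex_of_real k * (b * cnj b)"
        unfolding t_def by (simp add: cinner_scaleC_right b_def[symmetric] ac_simps)
      also have "b * cnj b = complex_of_real ((cmod b)^2)" by (rule complex_norm_square[symmetric])
      finally show ?thesis by simp
    qed
    have e2: "cmod t = k * cmod b" unfolding t_def using kp by (simp add: norm_mult)
    have "(norm (w - scaleC t m))^2 = (norm w)^2 + (k * cmod b)^2 * (norm m)^2 - 2 * (k * (cmod b)^2)"
      by (simp only: norm_diff_sq norm_scaleC e1 e2 Re_complex_of_real power_mult_distrib)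
    also have "(k * cmod b)^2 * (norm m)^2 = (k * (norm m)^2) * (k * (cmod b)^2)"
      by (simp add: power2_eq_square)
    also have "(k * (norm m)^2) * (k * (cmod b)^2) < 2 * (k * (cmod b)^2)"
      using km kp bne by (intro mult_strict_right_mono) (auto simp: b_def w_def)
    finally have "(norm (w - scaleC t m))^2 < (norm w)^2" by simp
    moreover have "norm w \<le> norm (w - scaleC t m)"
      using ymin[OF ym] by (simp add: w_def algebra_simps)
    ultimately show False
      by (meson norm_ge_zero not_less power_mono)
  qed
  with yM show ?thesis by blast
qed

lemma proj_unique:
  fixes M :: "'a::complex_inner set"
  assumes sub: "csubspace M"
    and "y1 \<in> M" "\<forall>m\<in>M. cinner (z - y1) m = 0"
    and "y2 \<in> M" "\<forall>m\<in>M. cinner (z - y2) m = 0"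
  shows "y1 = y2"
proof -
  have d: "y1 - y2 \<in> M" using assms csubspace_diff by blast
  have "cinner (z - y2) (y1 - y2) - cinner (z - y1) (y1 - y2) = 0" using assms d by simp
  then have "cinner (y1 - y2) (y1 - y2) = 0" by (simp add: cinner_diff_left)
  then show ?thesis by (simp add: cinner_self_norm)
qed

definition cproj :: "'a::complex_inner set \<Rightarrow> 'a \<Rightarrow> 'a" where
  "cproj M z = (THE y. y \<in> M \<and> (\<forall>m\<in>M. cinner (z - y) m = 0))"

lemma cproj:
  fixes M :: "'a::chilbert_space set"
  assumes sub: "csubspace M" and cl: "closed M"
  shows "cproj M z \<in> M" "\<And>m. m \<in> M \<Longrightarrow> cinner (z - cproj M z) m = 0"
proof -
  have "cproj M z \<in> M \<and> (\<forall>m\<in>M. cinner (z - cproj M z) m = 0)"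
    unfolding cproj_def
    by (rule theI') (use proj_exists[OF sub cl] proj_unique[OF sub] in blast)
  then show "cproj M z \<in> M" "\<And>m. m \<in> M \<Longrightarrow> cinner (z - cproj M z) m = 0" by auto
qed

lemma cproj_eqI:
  fixes M :: "'a::chilbert_space set"
  assumes sub: "csubspace M" and cl: "closed M"
    and "y \<in> M" "\<And>m. m \<in> M \<Longrightarrow> cinner (z - y) m = 0"
  shows "cproj M z = y"
  using proj_unique[OF sub] cproj[OF sub cl] assms by blast

lemma orth_proj_eq: "orth_proj M = cproj M"
  by (simp add: fun_eq_iff orth_proj_def cproj_def pinner_eq)



lemma op_zero: "is_operator D A \<Longrightarrow> A 0 = 0"
  unfolding is_operator_def csubspace_def
  by (metis add_0 add_cancel_right_right)
lemma op_diff: "is_operator D A \<Longrightarrow> x \<in> D \<Longrightarrow> y \<in> D \<Longrightarrow> A (x - y) = A x - A y"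
proof -
  assume op: "is_operator D A" and xy: "x \<in> D" "y \<in> D"
  have sub: "csubspace D" using op by (simp add: is_operator_def)
  have "x - y \<in> D" using csubspace_diff[OF sub xy] .
  then have "A ((x - y) + y) = A (x - y) + A y" using op xy unfolding is_operator_def by blast
  then show ?thesis by (simp add: algebra_simps)
qed
lemma op_scaleC: "is_operator D A \<Longrightarrow> x \<in> D \<Longrightarrow> A (scaleC c x) = scaleC c (A x)"
  by (simp add: is_operator_def)
lemma op_add: "is_operator D A \<Longrightarrow> x \<in> D \<Longrightarrow> y \<in> D \<Longrightarrow> A (x + y) = A x + A y"
  by (simp add: is_operator_def)
lemma op_sub: "is_operator D A \<Longrightarrow> csubspace D"
  by (simp add: is_operator_def)

lemma graph_csubspace:
  assumes op: "is_operator D A"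
  shows "csubspace (graph D A)"
proof -
  have sub: "csubspace D" using op by (simp add: is_operator_def)
  show ?thesis
    unfolding csubspace_def graph_def
  proof (intro conjI ballI allI)
    show "0 \<in> {(A x, x) |x. x \<in> D}"
      using sub op_zero[OF op] by (auto simp: csubspace_def zero_prod_def)
  next
    fix p q assume "p \<in> {(A x, x) |x. x \<in> D}" "q \<in> {(A x, x) |x. x \<in> D}"
    then obtain x y where "p = (A x, x)" "q = (A y, y)" "x \<in> D" "y \<in> D" by auto
    then show "p + q \<in> {(A x, x) |x. x \<in> D}"
      using op sub by (auto simp: is_operator_def csubspace_def intro!: exI[of _ "x + y"])
  next
    fix c p assume "p \<in> {(A x, x) |x. x \<in> D}"
    then obtain x where "p = (A x, x)" "x \<in> D" by auto
    then show "scaleC c p \<in> {(A x, x) |x. x \<in> D}"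
      using op sub by (auto simp: is_operator_def csubspace_def scaleC_prod_def intro!: exI[of _ "scaleC c x"])
  qed
qed

lemma cproj_best:
  fixes M :: "'a::chilbert_space set"
  assumes sub: "csubspace M" and cl: "closed M" and q: "q \<in> M"
  shows "norm (p - cproj M p) \<le> norm (p - q)"
proof -
  have "cproj M p - q \<in> M" using csubspace_diff[OF sub cproj(1)[OF sub cl] q] .
  then have "cinner (p - cproj M p) (cproj M p - q) = 0" using cproj(2)[OF sub cl] by blast
  then have "(norm ((p - cproj M p) + (cproj M p - q)))^2 = (norm (p - cproj M p))^2 + (norm (cproj M p - q))^2"
    by (rule pythag)
  then have "(norm (p - cproj M p))^2 \<le> (norm (p - q))^2" by simp
  then show ?thesis by (rule power2_le_imp_le) simp
qed

lemma cinner_orth_sym: "cinner x (y::'a::complex_inner) = 0 \<Longrightarrow> cinner y x = 0"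
  by (metis cinner_commute complex_cnj_zero)

lemma gap_le:
  fixes D :: "'a::chilbert_space set" and A A' :: "'a \<Rightarrow> 'b::chilbert_space"
  assumes opA: "is_operator D A" and opA': "is_operator D A'"
    and clA: "closed (graph D A)" and clA': "closed (graph D A')"
    and r0: "r \<ge> 0"
    and e1: "\<And>z. z \<in> D \<Longrightarrow> norm (A' z - A z) \<le> r * norm (A z, z)"
    and e2: "\<And>z. z \<in> D \<Longrightarrow> norm (A' z - A z) \<le> r * norm (A' z, z)"
  shows "gap D A D A' \<le> r"
proof -
  define M where "M = graph D A"
  define N where "N = graph D A'"
  have sM: "csubspace M" and sN: "csubspace N"
    unfolding M_def N_def using graph_csubspace opA opA' by auto
  have cM: "closed M" and cN: "closed N" using clA clA' by (auto simp: M_def N_def)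
  note PM = cproj[OF sM cM] and PN = cproj[OF sN cN]
  have dMN: "norm (p - cproj N p) \<le> r * norm p" if pM: "p \<in> M" for p
  proof -
    obtain z where z: "z \<in> D" "p = (A z, z)" using pM by (auto simp: M_def graph_def)
    have n: "(A' z, z) \<in> N" using z by (auto simp: N_def graph_def)
    have "norm (p - cproj N p) \<le> norm (p - (A' z, z))" by (rule cproj_best[OF sN cN n])
    also have "p - (A' z, z) = (A z - A' z, 0)" using z by simp
    also have "norm (A z - A' z, 0::'a) = norm (A' z - A z)" by (simp add: norm_Pair norm_minus_commute)
    also have "\<dots> \<le> r * norm p" using e1[OF z(1)] z by simp
    finally show ?thesis .
  qed
  have dNM: "norm (q - cproj M q) \<le> r * norm q" if qN: "q \<in> N" for q
  proof -
    obtain z where z: "z \<in> D" "q = (A' z, z)" using qN by (auto simp: N_def graph_def)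
    have n: "(A z, z) \<in> M" using z by (auto simp: M_def graph_def)
    have "norm (q - cproj M q) \<le> norm (q - (A z, z))" by (rule cproj_best[OF sM cM n])
    also have "q - (A z, z) = (A' z - A z, 0)" using z by simp
    also have "norm (A' z - A z, 0::'a) = norm (A' z - A z)" by (simp add: norm_Pair)
    also have "\<dots> \<le> r * norm q" using e2[OF z(1)] z by simp
    finally show ?thesis .
  qed
  have main: "norm (cproj M x - cproj N x) \<le> r * norm x" for x
  proof -
    define a where "a = cproj M x"
    define b where "b = cproj N x"
    define w where "w = x - b"
    have bN: "b \<in> N" unfolding b_def using PN by blast
    have aM: "a \<in> M" unfolding a_def using PM by blast
    have wN: "cinner w n = 0" if "n \<in> N" for n using PN(2)[OF that] by (simp add: w_def b_def)
    have PMb: "cproj M b \<in> M" using PM by blast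
    have PMw: "cproj M w = a - cproj M b"
    proof (rule cproj_eqI[OF sM cM])
      show "a - cproj M b \<in> M" using csubspace_diff[OF sM aM PMb] .
      fix m assume mM: "m \<in> M"
      have "w - (a - cproj M b) = (x - a) - (b - cproj M b)" by (simp add: w_def algebra_simps)
      then show "cinner (w - (a - cproj M b)) m = 0"
        using PM(2)[OF mM, of x] PM(2)[OF mM, of b] by (simp add: cinner_diff_left a_def)
    qed
    define p where "p = cproj M w"
    have pM: "p \<in> M" unfolding p_def using PM by blast
    have ab: "a - b = p - (b - cproj M b)" using PMw by (simp add: p_def algebra_simps)
    have orth1: "cinner p (- (b - cproj M b)) = 0"
      using cinner_orth_sym[OF PM(2)[OF pM, of b]] by (simp only: cinner_minus_right neg_equal_0_iff_equal)
    have sq1: "(norm (a - b))^2 = (norm p)^2 + (norm (b - cproj M b))^2"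
    proof -
      have "a - b = p + - (b - cproj M b)" using ab by simp
      then show ?thesis using pythag[OF orth1] by (simp only: norm_minus_cancel)
    qed
    have nb: "norm (b - cproj M b) \<le> r * norm b" using dNM[OF bN] .
    have np: "norm p \<le> r * norm w"
    proof -
      have c1: "cinner (w - p) p = 0" using PM(2)[OF pM, of w] by (simp add: p_def)
      have c2: "cinner (cproj N p) w = 0"
        using cinner_orth_sym[OF wN[OF PN(1)[of p]]] .
      have "cinner p p = cinner p w"
        using cinner_orth_sym[OF c1] by (simp add: cinner_diff_right)
      also have "\<dots> = cinner (p - cproj N p) w" using c2 by (simp add: cinner_diff_left)
      finally have "cinner p p = cinner (p - cproj N p) w" .
      then have "(norm p)^2 = Re (cinner (p - cproj N p) w)" by (simp add: cinner_self_Re[symmetric])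
      also have "\<dots> \<le> cmod (cinner (p - cproj N p) w)" by (rule complex_Re_le_cmod)
      also have "\<dots> \<le> norm (p - cproj N p) * norm w" by (rule cauchy_schwarz)
      also have "\<dots> \<le> (r * norm p) * norm w" using dMN[OF pM] by (simp add: mult_right_mono)
      finally have "norm p * norm p \<le> norm p * (r * norm w)" by (simp add: power2_eq_square ac_simps)
      then show ?thesis
        by (cases "norm p = 0") (use r0 in \<open>auto simp: mult_le_cancel_left\<close>)
    qed
    have xwb: "(norm x)^2 = (norm w)^2 + (norm b)^2"
    proof -
      have "x = w + b" by (simp add: w_def)
      moreover have "cinner w b = 0" using wN[OF bN] .
      ultimately show ?thesis using pythag by metis
    qed
    have "(norm (a - b))^2 \<le> (r * norm w)^2 + (r * norm b)^2"
      using sq1 np nb by (metis add_mono norm_ge_zero power_mono)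
    also have "\<dots> = (r * norm x)^2" using xwb by (simp add: power_mult_distrib distrib_left)
    finally have "(norm (a - b))^2 \<le> (r * norm x)^2" .
    then show ?thesis unfolding a_def b_def by (rule power2_le_imp_le) (use r0 in simp)
  qed
  show ?thesis
    unfolding gap_def orth_proj_eq
    by (rule onorm_bound[OF r0]) (use main in \<open>simp add: M_def N_def\<close>)
qed



lemma closed_transfer:
  fixes D :: "'a::chilbert_space set" and A A' :: "'a \<Rightarrow> 'b::chilbert_space"
  assumes opA: "is_operator D A" and opA': "is_operator D A'"
    and clA: "closed (graph D A)" and c0: "c \<ge> 0"
    and h1: "\<And>z. z \<in> D \<Longrightarrow> norm (A z) \<le> c * (norm (A' z) + norm z)"
    and h2: "\<And>z. z \<in> D \<Longrightarrow> norm (A' z) \<le> c * (norm (A z) + norm z)"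
  shows "closed (graph D A')"
  unfolding closed_sequential_limits
proof (intro allI impI, elim conjE)
  fix s l assume sG: "\<forall>n. s n \<in> graph D A'" and sl: "s \<longlonglongrightarrow> l"
  have sub: "csubspace D" using opA by (simp add: is_operator_def)
  define x where "x n = snd (s n)" for n
  have xD: "x n \<in> D" and sx: "s n = (A' (x n), x n)" for n
    using sG[rule_format, of n] unfolding graph_def x_def by force+
  have xl: "x \<longlonglongrightarrow> snd l" unfolding x_def by (rule tendsto_snd[OF sl])
  have Axl: "(\<lambda>n. A' (x n)) \<longlonglongrightarrow> fst l"
    using tendsto_fst[OF sl] by (simp add: sx)
  have CA': "Cauchy (\<lambda>n. A' (x n))" and Cx: "Cauchy x"
    using LIMSEQ_imp_Cauchy Axl xl by auto
  have "Cauchy (\<lambda>n. A (x n))"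
    unfolding Cauchy_def
  proof (intro allI impI)
    fix e :: real assume e: "e > 0"
    define e' where "e' = e / (2 * c + 1)"
    have e': "e' > 0" unfolding e'_def using e c0 by simp
    obtain N1 where N1: "\<And>i j. i \<ge> N1 \<Longrightarrow> j \<ge> N1 \<Longrightarrow> dist (A' (x i)) (A' (x j)) < e'"
      using CA' e' unfolding Cauchy_def by meson
    obtain N2 where N2: "\<And>i j. i \<ge> N2 \<Longrightarrow> j \<ge> N2 \<Longrightarrow> dist (x i) (x j) < e'"
      using Cx e' unfolding Cauchy_def by meson
    show "\<exists>N. \<forall>i\<ge>N. \<forall>j\<ge>N. dist (A (x i)) (A (x j)) < e"
    proof (intro exI[of _ "max N1 N2"] allI impI)
      fix i j assume ij: "max N1 N2 \<le> i" "max N1 N2 \<le> j"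
      have dD: "x i - x j \<in> D" using csubspace_diff[OF sub xD xD] .
      have "dist (A (x i)) (A (x j)) = norm (A (x i - x j))"
        by (simp add: dist_norm op_diff[OF opA xD xD])
      also have "\<dots> \<le> c * (norm (A' (x i - x j)) + norm (x i - x j))" using h1[OF dD] .
      also have "\<dots> = c * (dist (A' (x i)) (A' (x j)) + dist (x i) (x j))"
        by (simp add: dist_norm op_diff[OF opA' xD xD])
      also have "\<dots> \<le> c * (e' + e')"
        using N1[of i j] N2[of i j] ij c0 by (intro mult_left_mono) auto
      also have "\<dots> < e"
      proof -
        have "c * (e' + e') = e * (2 * c) / (2 * c + 1)" unfolding e'_def by (simp add: field_simps)
        also have "\<dots> < e" using e c0 by (simp add: field_simps)
        finally show ?thesis .
      qed
      finally show "dist (A (x i)) (A (x j)) < e" .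
    qed
  qed
  then obtain v where v: "(\<lambda>n. A (x n)) \<longlonglongrightarrow> v" using Cauchy_convergent convergent_def by blast
  have "(v, snd l) \<in> graph D A"
  proof -
    have "(\<lambda>n. (A (x n), x n)) \<longlonglongrightarrow> (v, snd l)" by (rule tendsto_Pair[OF v xl])
    moreover have "\<forall>n. (A (x n), x n) \<in> graph D A" using xD by (auto simp: graph_def)
    ultimately show ?thesis using clA[unfolded closed_sequential_limits, rule_format, of "\<lambda>n. (A (x n), x n)"] by blast
  qed
  then have lD: "snd l \<in> D" and vA: "v = A (snd l)" by (auto simp: graph_def)
  have "((\<lambda>n. A' (x n) - A' (snd l)) \<longlongrightarrow> 0) sequentially"
  proof (rule Lim_null_comparison)
    show "\<forall>\<^sub>F n in sequentially. norm (A' (x n) - A' (snd l)) \<le> c * (norm (A (x n) - A (snd l)) + norm (x n - snd l))"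
    proof (intro always_eventually allI)
      fix n
      have dD: "x n - snd l \<in> D" using csubspace_diff[OF sub xD lD] .
      show "norm (A' (x n) - A' (snd l)) \<le> c * (norm (A (x n) - A (snd l)) + norm (x n - snd l))"
        using h2[OF dD] by (simp add: op_diff[OF opA xD lD] op_diff[OF opA' xD lD])
    qed
    have "(\<lambda>n. c * (norm (A (x n) - A (snd l)) + norm (x n - snd l))) \<longlonglongrightarrow> c * (norm (A (snd l) - A (snd l)) + norm (snd l - snd l))"
      using v xl vA by (intro tendsto_intros) auto
    then show "(\<lambda>n. c * (norm (A (x n) - A (snd l)) + norm (x n - snd l))) \<longlonglongrightarrow> 0" by simp
  qed
  then have "(\<lambda>n. A' (x n)) \<longlonglongrightarrow> A' (snd l)" by (rule LIM_zero_cancel)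
  then have "fst l = A' (snd l)" using Axl LIMSEQ_unique by blast
  then show "l \<in> graph D A'" using lD by (auto simp: graph_def intro!: exI[of _ "snd l"] prod_eqI)
qed

lemma min_attainI:
  assumes "x0 \<in> D" "norm x0 = 1" "norm (A x0) = \<mu>"
    and "\<And>x. x \<in> D \<Longrightarrow> \<mu> * norm x \<le> norm (A x)"
  shows "minimum_attaining D A"
proof -
  have "min_modulus D A = \<mu>"
    unfolding min_modulus_def
    by (rule cInf_eq_minimum) (use assms in \<open>force+\<close>)
  then show ?thesis unfolding minimum_attaining_def using assms by auto
qed

lemma unit_in_D:
  fixes D :: "'a::chilbert_space set"
  assumes inf: "infinite_dimensional TYPE('a)" and sub: "csubspace D" and dense: "closure D = UNIV"
  shows "\<exists>x\<in>D. norm x = 1"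
proof -
  have "cspan ({}::'a set) \<noteq> UNIV" using inf unfolding infinite_dimensional_def by blast
  moreover have "cspan ({}::'a set) = {0}" unfolding cspan_def by auto
  ultimately obtain v :: 'a where v: "v \<noteq> 0" by auto
  have "\<not> D \<subseteq> {0}"
  proof
    assume "D \<subseteq> {0}"
    then have "closure D \<subseteq> {0}" by (rule closure_minimal) simp
    then show False using dense v by auto
  qed
  then obtain x where x: "x \<in> D" "x \<noteq> 0" by auto
  define y where "y = scaleC (complex_of_real (1 / norm x)) x"
  have "y \<in> D" using sub x unfolding y_def csubspace_def by blast
  moreover have "norm y = 1" unfolding y_def using x by (simp add: norm_scaleC norm_divide)
  ultimately show ?thesis by blast
qed

lemma min_modulus_facts:
  fixes D :: "'a::chilbert_space set" and A :: "'a \<Rightarrow> 'b::chilbert_space"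
  assumes op: "is_operator D A" and ex: "\<exists>x\<in>D. norm x = 1"
  shows "min_modulus D A \<ge> 0"
    and "\<And>x. x \<in> D \<Longrightarrow> min_modulus D A * norm x \<le> norm (A x)"
    and "\<And>t. min_modulus D A < t \<Longrightarrow> \<exists>x\<in>D. norm x = 1 \<and> norm (A x) < t"
proof -
  define S where "S = {norm (A x) | x. x \<in> D \<and> norm x = 1}"
  have Sne: "S \<noteq> {}" using ex by (auto simp: S_def)
  have bdd: "bdd_below S" by (auto simp: S_def intro!: bdd_belowI[of _ 0])
  have mS: "min_modulus D A = Inf S" by (simp add: min_modulus_def S_def)
  show "min_modulus D A \<ge> 0" unfolding mS by (rule cInf_greatest[OF Sne]) (auto simp: S_def)
  show "\<And>t. min_modulus D A < t \<Longrightarrow> \<exists>x\<in>D. norm x = 1 \<and> norm (A x) < t"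
    using cInf_lessD[OF Sne] unfolding mS S_def by blast
  fix x assume xD: "x \<in> D"
  show "min_modulus D A * norm x \<le> norm (A x)"
  proof (cases "x = 0")
    case True then show ?thesis using op_zero[OF op] by simp
  next
    case False
    define y where "y = scaleC (complex_of_real (1 / norm x)) x"
    have yD: "y \<in> D" using op_sub[OF op] xD unfolding y_def csubspace_def by blast
    have ny: "norm y = 1" unfolding y_def using False by (simp add: norm_scaleC norm_divide)
    have "norm (A y) = norm (A x) / norm x"
      unfolding y_def op_scaleC[OF op xD] by (simp add: norm_scaleC norm_divide)
    moreover have "Inf S \<le> norm (A y)" by (rule cInf_lower[OF _ bdd]) (use yD ny in \<open>auto simp: S_def\<close>)
    ultimately have "Inf S \<le> norm (A x) / norm x" by simp
    moreover have "norm x > 0" using False by simp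
    ultimately show ?thesis unfolding mS by (simp add: le_divide_eq)
  qed
qed



lemma cmod_cinner_unit: "norm (x0::'a::complex_inner) = 1 \<Longrightarrow> cmod (cinner x0 z) \<le> norm z"
  using cauchy_schwarz[of x0 z] by simp

lemma cinner_unit: "norm (x0::'a::complex_inner) = 1 \<Longrightarrow> cinner x0 x0 = 1"
  by (simp add: cinner_self_norm)

lemma case_zero:
  fixes D :: "'a::chilbert_space set" and A :: "'a \<Rightarrow> 'b::chilbert_space"
  assumes ddc: "densely_defined_closed D A" and ex: "\<exists>x\<in>D. norm x = 1"
    and m0: "min_modulus D A = 0" and e: "e > 0"
  shows "\<exists>D' A'. densely_defined_closed D' A' \<and> minimum_attaining D' A' \<and> gap D A D' A' < e"
proof -
  have op: "is_operator D A" and dense: "closure D = UNIV" and cl: "closed (graph D A)"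
    using ddc by (auto simp: densely_defined_closed_def)
  have sub: "csubspace D" using op_sub[OF op] .
  obtain x0 where x0: "x0 \<in> D" "norm x0 = 1" "norm (A x0) < e"
    using min_modulus_facts(3)[OF op ex, of e] m0 e by auto
  define u where "u = A x0"
  define A' where "A' x = A x - scaleC (cinner x0 x) u" for x
  have op': "is_operator D A'"
    unfolding is_operator_def
  proof (intro conjI ballI allI)
    show "csubspace D" by fact
    fix x y assume "x \<in> D" "y \<in> D"
    then show "A' (x + y) = A' x + A' y"
      unfolding A'_def by (simp add: op_add[OF op] cinner_add_right scaleC_add_left)
  next
    fix c x assume "x \<in> D"
    then show "A' (scaleC c x) = scaleC c (A' x)"
      unfolding A'_def by (simp add: op_scaleC[OF op] cinner_scaleC_right scaleC_diff_right scaleC_scaleC)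
  qed
  have diff: "norm (A' z - A z) \<le> norm u * norm z" for z
  proof -
    have "A' z - A z = - scaleC (cinner x0 z) u" unfolding A'_def by simp
    then have "norm (A' z - A z) = cmod (cinner x0 z) * norm u" by (simp add: norm_scaleC)
    also have "\<dots> \<le> norm z * norm u" using cmod_cinner_unit[OF x0(2)] by (simp add: mult_right_mono)
    finally show ?thesis by (simp add: ac_simps)
  qed
  have clA': "closed (graph D A')"
  proof (rule closed_transfer[OF op op' cl, of "1 + norm u"])
    fix z assume "z \<in> D"
    have "norm (A z) \<le> norm (A' z) + norm (A' z - A z)" using norm_triangle_ineq4[of "A' z" "A' z - A z"] by simp
    also have "\<dots> \<le> norm (A' z) + norm u * norm z" using diff by simp
    also have "\<dots> \<le> (1 + norm u) * (norm (A' z) + norm z)" by (simp add: algebra_simps)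
    finally show "norm (A z) \<le> (1 + norm u) * (norm (A' z) + norm z)" .
    have "norm (A' z) \<le> norm (A z) + norm (A' z - A z)" using norm_triangle_ineq[of "A z" "A' z - A z"] by simp
    also have "\<dots> \<le> norm (A z) + norm u * norm z" using diff by simp
    also have "\<dots> \<le> (1 + norm u) * (norm (A z) + norm z)" by (simp add: algebra_simps)
    finally show "norm (A' z) \<le> (1 + norm u) * (norm (A z) + norm z)" .
  qed simp
  have gap: "gap D A D A' \<le> norm u"
  proof (rule gap_le[OF op op' cl clA'])
    fix z assume "z \<in> D"
    show "norm (A' z - A z) \<le> norm u * norm (A z, z)"
      using diff[of z] norm_snd_le[of z "A z"] by (meson mult_left_mono norm_ge_zero order_trans)
    show "norm (A' z - A z) \<le> norm u * norm (A' z, z)"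
      using diff[of z] norm_snd_le[of z "A' z"] by (meson mult_left_mono norm_ge_zero order_trans)
  qed simp
  have ma: "minimum_attaining D A'"
  proof (rule min_attainI[OF x0(1) x0(2)])
    show "norm (A' x0) = 0" unfolding A'_def u_def by (simp add: cinner_unit[OF x0(2)] scaleC_one)
  qed simp
  have "densely_defined_closed D A'" using op' dense clA' by (simp add: densely_defined_closed_def)
  moreover have "gap D A D A' < e" using gap x0(3) u_def by simp
  ultimately show ?thesis using ma by blast
qed



lemma quad_real:
  fixes \<eta> B C :: real
  assumes "\<eta> \<ge> 0" "B \<ge> 0" "C \<ge> 0" and h: "\<And>k. k > 0 \<Longrightarrow> 0 \<le> \<eta> - 2 * k * B + k^2 * B * C"
  shows "B \<le> \<eta> * C"
proof (cases "C > 0")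
  case True
  have "0 \<le> \<eta> - 2 * (1/C) * B + (1/C)^2 * B * C" using h[of "1/C"] True by simp
  also have "(1/C)^2 * B * C = B / C" using True by (simp add: power2_eq_square)
  also have "2 * (1/C) * B = 2 * (B / C)" by simp
  finally have "B / C \<le> \<eta>" by simp
  then show ?thesis using True by (simp add: divide_le_eq mult.commute)
next
  case False
  then have C0: "C = 0" using assms by simp
  show ?thesis
  proof (rule ccontr)
    assume "\<not> B \<le> \<eta> * C"
    then have Bp: "B > 0" using C0 by simp
    have "0 \<le> \<eta> - 2 * ((\<eta> + 1) / B) * B" using h[of "(\<eta> + 1) / B"] C0 Bp assms(1) by simp
    also have "2 * ((\<eta> + 1) / B) * B = 2 * (\<eta> + 1)" using Bp by simp
    finally show False using assms(1) by simp
  qed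
qed



lemma case_pos:
  fixes D :: "'a::chilbert_space set" and A :: "'a \<Rightarrow> 'b::chilbert_space"
  assumes ddc: "densely_defined_closed D A" and ex: "\<exists>x\<in>D. norm x = 1"
    and mpos: "min_modulus D A > 0" and e: "e > 0"
  shows "\<exists>D' A'. densely_defined_closed D' A' \<and> minimum_attaining D' A' \<and> gap D A D' A' < e"
proof -
  have op: "is_operator D A" and dense: "closure D = UNIV" and cl: "closed (graph D A)"
    using ddc by (auto simp: densely_defined_closed_def)
  have sub: "csubspace D" using op_sub[OF op] .
  define m where "m = min_modulus D A"
  have m0: "m > 0" using mpos m_def by simp
  have lower: "\<And>x. x \<in> D \<Longrightarrow> m * norm x \<le> norm (A x)"
    using min_modulus_facts(2)[OF op ex] m_def by simp
  have lower2: "m^2 * (norm x)^2 \<le> (norm (A x))^2" if "x \<in> D" for x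
    using lower[OF that] m0 by (metis power_mult_distrib power_mono mult_nonneg_nonneg less_imp_le norm_ge_zero)
  define c0 where "c0 = min 1 (e / (4 + 4 / m))"
  have "4 + 4 / m > 0" using m0 by (simp add: add_pos_pos)
  then have c0p: "c0 > 0" unfolding c0_def using e by simp
  have c01: "c0 \<le> 1" unfolding c0_def by simp
  have c0e: "c0 * (1 + 2 / m) < e"
  proof -
    have "c0 * (1 + 2 / m) \<le> (e / (4 + 4 / m)) * (1 + 2 / m)"
      unfolding c0_def using m0 by (intro mult_right_mono) auto
    also have "\<dots> = e * ((m + 2) / (4 * m + 4))"
    proof -
      have a1: "4 + 4 / m = (4 * m + 4) / m" using m0 by (simp add: field_simps)
      have a2: "1 + 2 / m = (m + 2) / m" using m0 by (simp add: field_simps)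
      have a3: "4 * m + 4 > 0" using m0 by simp
      have "e / ((4 * m + 4) / m) = e * m / (4 * m + 4)" by simp
      then show ?thesis unfolding a1 a2 using m0 by simp
    qed
    also have "\<dots> < e * 1"
      using e m0 by (intro mult_strict_left_mono) (auto simp: divide_less_eq)
    finally show ?thesis by simp
  qed
  have "m < sqrt (m^2 + c0^2)"
    using m0 c0p by (metis real_sqrt_less_iff real_sqrt_abs abs_of_pos less_add_same_cancel1 zero_less_power)
  then obtain x0 where x0: "x0 \<in> D" "norm x0 = 1" "norm (A x0) < sqrt (m^2 + c0^2)"
    using min_modulus_facts(3)[OF op ex] m_def by blast
  define u where "u = A x0"
  define nu where "nu = norm u"
  have num: "m \<le> nu" using lower[OF x0(1)] x0(2) by (simp add: nu_def u_def)
  have nup: "nu > 0" using num m0 by simp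
  define \<eta> where "\<eta> = nu^2 - m^2"
  have eta0: "\<eta> \<ge> 0" unfolding \<eta>_def using num m0 by (simp add: power_mono)
  have eta_lt: "\<eta> < c0^2"
  proof -
    have "nu < sqrt (m^2 + c0^2)" using x0(3) by (simp add: nu_def u_def)
    then have "nu^2 < m^2 + c0^2" using nup
      by (metis real_sqrt_less_iff real_sqrt_abs abs_of_pos)
    then show ?thesis unfolding \<eta>_def by simp
  qed
  have eta_le_nu: "\<eta> \<le> nu^2" unfolding \<eta>_def by simp
  define \<rho> where "\<rho> = sqrt \<eta>"
  have rho0: "\<rho> \<ge> 0" unfolding \<rho>_def using eta0 by simp
  have rho_lt: "\<rho> < c0"
  proof -
    have "sqrt \<eta> < sqrt (c0^2)" using eta_lt by (rule real_sqrt_less_mono)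
    then show ?thesis unfolding \<rho>_def using c0p by simp
  qed
  have t_le: "nu - m \<le> c0 / m"
  proof -
    have "(nu - m) * m \<le> (nu - m) * (nu + m)" using num m0 by (intro mult_left_mono) auto
    also have "\<dots> = \<eta>" unfolding \<eta>_def by (simp add: power2_eq_square algebra_simps)
    also have "\<dots> \<le> c0" using eta_lt c01 c0p by (smt (verit) mult_left_le power2_eq_square)
    finally show ?thesis using m0 by (simp add: le_divide_eq)
  qed
  define s where "s = m / nu"
  have snu: "s * nu = m" unfolding s_def using nup by simp
  have s0: "s \<ge> 0" "s \<le> 1" unfolding s_def using m0 nup num by auto
  define nu2 where "nu2 = complex_of_real (nu^2)"
  have nu2nz: "nu2 \<noteq> 0" unfolding nu2_def using nup by simp
  have cuu: "cinner u u = nu2" unfolding nu2_def nu_def by (simp add: cinner_self_norm)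
  define A' where "A' x = A x - scaleC (cinner u (A x) / nu2) u + scaleC (complex_of_real s * cinner x0 x) u" for x
  have op': "is_operator D A'"
    unfolding is_operator_def
  proof (intro conjI ballI allI)
    show "csubspace D" by fact
    fix x y assume "x \<in> D" "y \<in> D"
    then show "A' (x + y) = A' x + A' y"
      unfolding A'_def by (simp add: op_add[OF op] cinner_add_right scaleC_add_left add_divide_distrib distrib_left algebra_simps)
  next
    fix c x assume "x \<in> D"
    then show "A' (scaleC c x) = scaleC c (A' x)"
      unfolding A'_def by (simp add: op_scaleC[OF op] cinner_scaleC_right scaleC_diff_right scaleC_add_right scaleC_scaleC ac_simps)
  qed
  have cross: "(cmod (cinner u (A y)))^2 \<le> \<eta> * ((norm (A y))^2 - m^2 * (norm y)^2)"
    if yD: "y \<in> D" and yo: "cinner x0 y = 0" for y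
  proof -
    define b where "b = cinner u (A y)"
    define C where "C = (norm (A y))^2 - m^2 * (norm y)^2"
    have C0: "C \<ge> 0" unfolding C_def using lower2[OF yD] by simp
    show ?thesis unfolding b_def[symmetric] C_def[symmetric]
    proof (rule quad_real[OF eta0 _ C0])
      show "0 \<le> (cmod b)^2" by simp
      fix k :: real assume k: "k > 0"
      define \<tau> where "\<tau> = - (complex_of_real k * cnj b)"
      have wD: "x0 + scaleC \<tau> y \<in> D" using sub x0(1) yD by (simp add: csubspace_def)
      have Aw: "A (x0 + scaleC \<tau> y) = u + scaleC \<tau> (A y)"
        using op_add[OF op x0(1)] op_scaleC[OF op yD] yD sub by (simp add: u_def csubspace_def)
      have nw: "(norm (x0 + scaleC \<tau> y))^2 = 1 + (cmod \<tau>)^2 * (norm y)^2"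
        using pythag[of x0 "scaleC \<tau> y"] yo x0(2) by (simp add: cinner_scaleC_right norm_scaleC power_mult_distrib)
      have tb: "\<tau> * b = complex_of_real (- (k * (cmod b)^2))"
      proof -
        have "\<tau> * b = - (complex_of_real k * (b * cnj b))" unfolding \<tau>_def by (simp add: ac_simps)
        also have "b * cnj b = complex_of_real ((cmod b)^2)" by (rule complex_norm_square[symmetric])
        finally show ?thesis by simp
      qed
      have ct: "cmod \<tau> = k * cmod b" unfolding \<tau>_def using k by (simp add: norm_mult)
      have nAw: "(norm (u + scaleC \<tau> (A y)))^2 = nu^2 + (k * cmod b)^2 * (norm (A y))^2 - 2 * (k * (cmod b)^2)"
      proof -
        have "cinner u (scaleC \<tau> (A y)) = \<tau> * b" by (simp add: cinner_scaleC_right b_def)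
        then show ?thesis
          by (simp only: norm_add_sq norm_scaleC power_mult_distrib ct tb Re_complex_of_real nu_def)
      qed
      have "m^2 * (1 + (k * cmod b)^2 * (norm y)^2) \<le> nu^2 + (k * cmod b)^2 * (norm (A y))^2 - 2 * (k * (cmod b)^2)"
        using lower2[OF wD] nw nAw Aw ct by simp
      then have "0 \<le> \<eta> - 2 * (k * (cmod b)^2) + (k * cmod b)^2 * C"
        unfolding \<eta>_def C_def by (simp add: algebra_simps)
      then show "0 \<le> \<eta> - 2 * k * (cmod b)^2 + k^2 * (cmod b)^2 * C"
        by (simp add: power_mult_distrib ac_simps)
    qed
  qed
  have decomp: "\<exists>\<alpha> y b q. y \<in> D \<and> cinner x0 y = 0 \<and> cmod \<alpha> \<le> norm z
      \<and> A z = scaleC \<alpha> u + A y \<and> b = cinner u (A y)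
      \<and> (norm z)^2 = (cmod \<alpha>)^2 + (norm y)^2
      \<and> A' z = scaleC (complex_of_real s * \<alpha>) u + q
      \<and> (norm q)^2 = (norm (A y))^2 - (cmod b)^2 / nu^2
      \<and> (norm (A' z))^2 = m^2 * (cmod \<alpha>)^2 + (norm q)^2
      \<and> A' z - A z = scaleC (complex_of_real s * \<alpha> - \<alpha>) u - scaleC (b / nu2) u"
    if zD: "z \<in> D" for z
  proof -
    define \<alpha> where "\<alpha> = cinner x0 z"
    define y where "y = z - scaleC \<alpha> x0"
    define b where "b = cinner u (A y)"
    define q where "q = A y - scaleC (b / nu2) u"
    have yD: "y \<in> D" unfolding y_def using sub zD x0(1) by (simp add: csubspace_diff csubspace_def)
    have yo: "cinner x0 y = 0" unfolding y_def \<alpha>_def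
      by (simp add: cinner_diff_right cinner_scaleC_right cinner_unit[OF x0(2)])
    have ca: "cmod \<alpha> \<le> norm z" unfolding \<alpha>_def by (rule cmod_cinner_unit[OF x0(2)])
    have x0aD: "scaleC \<alpha> x0 \<in> D" using sub x0(1) by (simp add: csubspace_def)
    have Az: "A z = scaleC \<alpha> u + A y"
    proof -
      have "A y = A z - A (scaleC \<alpha> x0)" unfolding y_def by (rule op_diff[OF op zD x0aD])
      then show ?thesis by (simp add: op_scaleC[OF op x0(1)] u_def)
    qed
    have nz: "(norm z)^2 = (cmod \<alpha>)^2 + (norm y)^2"
    proof -
      have "cinner (scaleC \<alpha> x0) y = 0" by (simp add: cinner_scaleC_left yo)
      from pythag[OF this] show ?thesis by (simp add: y_def norm_scaleC x0(2))
    qed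
    have cuAz: "cinner u (A z) / nu2 = \<alpha> + b / nu2"
      using nu2nz by (simp add: Az cinner_add_right cinner_scaleC_right cuu b_def field_simps)
    have A'z: "A' z = scaleC (complex_of_real s * \<alpha>) u + q"
      unfolding A'_def cuAz q_def \<alpha>_def[symmetric]
      by (simp add: Az scaleC_add_left algebra_simps)
    have cuq: "cinner u q = 0" unfolding q_def using nu2nz
      by (simp add: cinner_diff_right cinner_scaleC_right cuu b_def)
    have nq: "(norm q)^2 = (norm (A y))^2 - (cmod b)^2 / nu^2"
    proof -
      have i1: "cinner (A y) (scaleC (b / nu2) u) = complex_of_real ((cmod b)^2 / nu^2)"
      proof -
        have "cinner (A y) (scaleC (b / nu2) u) = (b * cnj b) / nu2"
          by (simp add: cinner_scaleC_right cinner_commute[of "A y" u] b_def)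
        also have "b * cnj b = complex_of_real ((cmod b)^2)" by (rule complex_norm_square[symmetric])
        finally show ?thesis by (simp add: nu2_def)
      qed
      have i2: "(norm (scaleC (b / nu2) u))^2 = (cmod b)^2 / nu^2"
      proof -
        have cn: "cmod nu2 = nu^2" unfolding nu2_def by (simp only: norm_of_real abs_power2)
        have "norm (scaleC (b / nu2) u) = cmod b / nu^2 * nu"
          by (simp add: norm_scaleC norm_divide cn nu_def)
        also have "(cmod b / nu^2 * nu)^2 = (cmod b)^2 / nu^2"
          using nup by (simp add: power2_eq_square field_simps)
        finally show ?thesis .
      qed
      show ?thesis unfolding q_def norm_diff_sq i1 i2 Re_complex_of_real by simp
    qed
    have nA'z: "(norm (A' z))^2 = m^2 * (cmod \<alpha>)^2 + (norm q)^2"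
    proof -
      have "cinner (scaleC (complex_of_real s * \<alpha>) u) q = 0" by (simp add: cinner_scaleC_left cuq)
      from pythag[OF this] have "(norm (A' z))^2 = (s * cmod \<alpha> * nu)^2 + (norm q)^2"
        using s0 by (simp add: A'z norm_scaleC norm_mult nu_def)
      also have "s * cmod \<alpha> * nu = m * cmod \<alpha>" using snu by (simp add: ac_simps)
      finally show ?thesis by (simp add: power_mult_distrib)
    qed
    have diff: "A' z - A z = scaleC (complex_of_real s * \<alpha> - \<alpha>) u - scaleC (b / nu2) u"
      by (simp add: A'z Az q_def scaleC_diff_left algebra_simps)
    show ?thesis
      by (intro exI[of _ \<alpha>] exI[of _ y] exI[of _ b] exI[of _ q]) (use yD yo ca Az nz A'z nq nA'z diff b_def in simp)
  qed
  define r where "r = c0 * (1 + 2 / m)"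
  have r0: "r \<ge> 0" unfolding r_def using c0p m0 by simp
  have est: "m * norm z \<le> norm (A' z) \<and> norm (A z) \<le> (nu + nu / m) * (norm (A' z) + norm z)
      \<and> norm (A' z - A z) \<le> r * norm (A z, z) \<and> norm (A' z - A z) \<le> r * norm (A' z, z)"
    if zD: "z \<in> D" for z
  proof -
    obtain \<alpha> y b q where yD: "y \<in> D" and yo: "cinner x0 y = 0" and ca: "cmod \<alpha> \<le> norm z"
      and Az: "A z = scaleC \<alpha> u + A y" and bdef: "b = cinner u (A y)"
      and nz: "(norm z)^2 = (cmod \<alpha>)^2 + (norm y)^2"
      and A'z: "A' z = scaleC (complex_of_real s * \<alpha>) u + q"
      and nq: "(norm q)^2 = (norm (A y))^2 - (cmod b)^2 / nu^2"
      and nA'z: "(norm (A' z))^2 = m^2 * (cmod \<alpha>)^2 + (norm q)^2"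
      and diff: "A' z - A z = scaleC (complex_of_real s * \<alpha> - \<alpha>) u - scaleC (b / nu2) u"
      using decomp[OF zD] by blast
    define B where "B = cmod b"
    define Y where "Y = norm (A y)"
    have B0: "B \<ge> 0" "Y \<ge> 0" unfolding B_def Y_def by auto
    have cr: "B^2 \<le> \<eta> * (Y^2 - m^2 * (norm y)^2)"
      using cross[OF yD yo] unfolding B_def Y_def bdef by simp
    have Cnn: "Y^2 - m^2 * (norm y)^2 \<ge> 0" using lower2[OF yD] unfolding Y_def by simp
    have nu2p: "nu^2 > 0" using nup by simp
    have nq': "(norm q)^2 = Y^2 - B^2 / nu^2" using nq unfolding B_def Y_def .
    have i: "(norm q)^2 \<ge> m^2 * (norm y)^2"
    proof -
      have "B^2 \<le> nu^2 * (Y^2 - m^2 * (norm y)^2)"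
        using cr eta_le_nu Cnn by (meson mult_right_mono order_trans)
      then have "B^2 / nu^2 \<le> Y^2 - m^2 * (norm y)^2"
        using nu2p by (simp add: divide_le_eq mult.commute)
      then show ?thesis using nq' by simp
    qed
    have BY: "B^2 \<le> \<eta> * Y^2"
    proof -
      have "\<eta> * (Y^2 - m^2 * (norm y)^2) \<le> \<eta> * Y^2" using eta0 by (simp add: mult_left_mono)
      then show ?thesis using cr by simp
    qed
    have ii: "m * Y \<le> nu * norm q"
    proof -
      have "nu^2 * (norm q)^2 = nu^2 * Y^2 - B^2" using nq' nu2p by (simp add: field_simps)
      also have "\<dots> \<ge> nu^2 * Y^2 - \<eta> * Y^2" using BY by simp
      finally have "(m * Y)^2 \<le> (nu * norm q)^2"
        unfolding \<eta>_def by (simp add: power_mult_distrib algebra_simps)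
      moreover have "0 \<le> nu * norm q" using nup by simp
      ultimately show ?thesis by (rule power2_le_imp_le)
    qed
    have qA': "norm q \<le> norm (A' z)"
    proof -
      have "(norm q)^2 \<le> (norm (A' z))^2" using nA'z by simp
      then show ?thesis by (rule power2_le_imp_le) simp
    qed
    have iii: "B \<le> \<rho> * Y"
    proof -
      have "B^2 \<le> (\<rho> * Y)^2" using BY eta0 unfolding \<rho>_def by (simp add: power_mult_distrib)
      moreover have "0 \<le> \<rho> * Y" using rho0 B0 by simp
      ultimately show ?thesis by (rule power2_le_imp_le)
    qed
    have E1: "m * norm z \<le> norm (A' z)"
    proof -
      have "(m * norm z)^2 = m^2 * (cmod \<alpha>)^2 + m^2 * (norm y)^2"
        using nz by (simp add: power_mult_distrib algebra_simps)
      also have "\<dots> \<le> (norm (A' z))^2" using nA'z i by simp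
      finally show ?thesis by (rule power2_le_imp_le) simp
    qed
    have Ay_le: "Y \<le> norm (A z) + cmod \<alpha> * nu"
    proof -
      have "A y = A z - scaleC \<alpha> u" using Az by simp
      then have "Y = norm (A z - scaleC \<alpha> u)" unfolding Y_def by simp
      also have "\<dots> \<le> norm (A z) + norm (scaleC \<alpha> u)" by (rule norm_triangle_ineq4)
      finally show ?thesis by (simp add: norm_scaleC nu_def)
    qed
    have Y_le: "m * Y \<le> nu * norm (A' z)" using ii qA' nup by (meson mult_left_mono less_imp_le order_trans)
    have dnorm: "norm (A' z - A z) \<le> cmod \<alpha> * (nu - m) + B / nu"
    proof -
      have "norm (A' z - A z) \<le> norm (scaleC (complex_of_real s * \<alpha> - \<alpha>) u) + norm (scaleC (b / nu2) u)"
        unfolding diff by (rule norm_triangle_ineq4)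
      also have "norm (scaleC (complex_of_real s * \<alpha> - \<alpha>) u) = cmod \<alpha> * (nu - m)"
      proof -
        have "complex_of_real s * \<alpha> - \<alpha> = - (complex_of_real (1 - s) * \<alpha>)" by (simp add: algebra_simps)
        moreover have "cmod (complex_of_real (1 - s)) = 1 - s" using s0 by (simp only: norm_of_real abs_of_nonneg diff_ge_0_iff_ge)
        ultimately have "cmod (complex_of_real s * \<alpha> - \<alpha>) = (1 - s) * cmod \<alpha>"
          by (simp only: norm_minus_cancel norm_mult)
        then have "norm (scaleC (complex_of_real s * \<alpha> - \<alpha>) u) = (1 - s) * cmod \<alpha> * nu"
          by (simp only: norm_scaleC nu_def)
        also have "\<dots> = cmod \<alpha> * (nu - s * nu)" by (simp add: algebra_simps)
        finally show ?thesis by (simp only: snu)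
      qed
      also have "norm (scaleC (b / nu2) u) = B / nu"
      proof -
        have cn: "cmod nu2 = nu^2" unfolding nu2_def by (simp only: norm_of_real abs_power2)
        have "norm (scaleC (b / nu2) u) = B / nu^2 * nu" by (simp add: norm_scaleC norm_divide cn nu_def B_def)
        also have "\<dots> = B / nu" using nup by (simp add: power2_eq_square)
        finally show ?thesis .
      qed
      finally show ?thesis .
    qed
    have t1: "cmod \<alpha> * (nu - m) \<le> (c0 / m) * norm z"
    proof -
      have "cmod \<alpha> * (nu - m) \<le> norm z * (c0 / m)"
        by (rule mult_mono[OF ca t_le]) (use num in simp_all)
      then show ?thesis by (simp only: mult.commute)
    qed
    have Bnu: "B / nu \<le> \<rho> * Y / nu" using iii nup by (simp add: divide_right_mono)
    have E2: "norm (A z) \<le> (nu + nu / m) * (norm (A' z) + norm z)"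
    proof -
      have "norm (A z) \<le> cmod \<alpha> * nu + Y"
      proof -
        have "norm (A z) \<le> norm (scaleC \<alpha> u) + norm (A y)" unfolding Az by (rule norm_triangle_ineq)
        then show ?thesis by (simp add: norm_scaleC nu_def Y_def)
      qed
      also have "cmod \<alpha> * nu \<le> nu * norm z" using ca nup by (simp add: mult.commute mult_left_mono)
      also have "Y \<le> (nu / m) * norm (A' z)" using Y_le m0 by (simp add: field_simps)
      finally have X: "norm (A z) \<le> nu * norm z + (nu / m) * norm (A' z)" by simp
      have "(nu + nu / m) * (norm (A' z) + norm z) = (nu * norm z + (nu / m) * norm (A' z)) + (nu * norm (A' z) + (nu / m) * norm z)"
        by (simp add: algebra_simps)
      moreover have "0 \<le> nu * norm (A' z) + (nu / m) * norm z" using nup m0 by simp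
      ultimately show ?thesis using X by linarith
    qed
    have E3: "norm (A' z - A z) \<le> r * norm (A z, z)"
    proof -
      define N where "N = norm (A z, z)"
      have Nz: "norm z \<le> N" and NA: "norm (A z) \<le> N" unfolding N_def by (rule norm_snd_le, rule norm_fst_le)
      have "\<rho> * Y / nu \<le> \<rho> * (norm (A z) + cmod \<alpha> * nu) / nu"
        using Ay_le rho0 nup by (simp add: divide_right_mono mult_left_mono)
      also have "\<dots> = \<rho> * norm (A z) / nu + \<rho> * cmod \<alpha>" using nup by (simp add: field_simps)
      finally have f0: "\<rho> * Y / nu \<le> \<rho> * norm (A z) / nu + \<rho> * cmod \<alpha>" .
      have f1: "\<rho> * norm (A z) / nu \<le> c0 * norm (A z) / m"
        using rho_lt rho0 num m0 by (intro frac_le mult_right_mono) auto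
      have f2: "\<rho> * cmod \<alpha> \<le> c0 * norm z" using rho_lt ca rho0 by (intro mult_mono) auto
      have "\<rho> * Y / nu \<le> c0 * norm (A z) / m + c0 * norm z" using f0 f1 f2 by linarith
      then have "norm (A' z - A z) \<le> (c0 / m) * norm z + (c0 * norm (A z) / m + c0 * norm z)"
        using dnorm t1 Bnu by linarith
      also have "\<dots> \<le> (c0 / m) * N + (c0 * N / m + c0 * N)"
        using Nz NA c0p m0 by (intro add_mono mult_left_mono divide_right_mono) auto
      also have "\<dots> = r * N" unfolding r_def by (simp add: field_simps)
      finally show ?thesis unfolding N_def .
    qed
    have E4: "norm (A' z - A z) \<le> r * norm (A' z, z)"
    proof -
      define N where "N = norm (A' z, z)"
      have Nz: "norm z \<le> N" and NA: "norm (A' z) \<le> N" unfolding N_def by (rule norm_snd_le, rule norm_fst_le)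
      have "\<rho> * Y / nu \<le> c0 * norm (A' z) / m"
      proof -
        have "\<rho> * Y / nu = \<rho> * (m * Y) / (m * nu)" using m0 by simp
        also have "\<dots> \<le> \<rho> * (nu * norm (A' z)) / (m * nu)"
          using Y_le rho0 m0 nup by (intro divide_right_mono mult_left_mono) auto
        also have "\<dots> = \<rho> * norm (A' z) / m" using nup by simp
        also have "\<dots> \<le> c0 * norm (A' z) / m"
          using rho_lt m0 by (intro divide_right_mono mult_right_mono) auto
        finally show ?thesis .
      qed
      then have "norm (A' z - A z) \<le> (c0 / m) * norm z + c0 * norm (A' z) / m"
        using dnorm t1 Bnu by linarith
      also have "\<dots> \<le> (c0 / m) * N + c0 * N / m"
        using Nz NA c0p m0 by (intro add_mono mult_left_mono divide_right_mono) auto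
      also have "\<dots> \<le> r * N"
      proof -
        have "(c0 / m) * N + c0 * N / m = (c0 * (2 / m)) * N" by (simp add: field_simps)
        also have "\<dots> \<le> r * N" unfolding r_def using c0p Nz m0 by (intro mult_right_mono) (auto simp: field_simps intro: order_trans[OF norm_ge_zero])
        finally show ?thesis .
      qed
      finally show ?thesis unfolding N_def .
    qed
    show ?thesis using E1 E2 E3 E4 by blast
  qed
  define c where "c = nu + nu / m + 1 + r"
  have clA': "closed (graph D A')"
  proof (rule closed_transfer[OF op op' cl, of c])
    show "c \<ge> 0" unfolding c_def using nup m0 r0 by simp
    fix z assume zD: "z \<in> D"
    note E = est[OF zD]
    have "norm (A z) \<le> (nu + nu / m) * (norm (A' z) + norm z)" using E by blast
    also have "\<dots> \<le> c * (norm (A' z) + norm z)" unfolding c_def using r0 by (intro mult_right_mono) auto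
    finally show "norm (A z) \<le> c * (norm (A' z) + norm z)" .
    have "norm (A' z) \<le> norm (A z) + norm (A' z - A z)"
      using norm_triangle_ineq[of "A z" "A' z - A z"] by simp
    also have "\<dots> \<le> norm (A z) + r * norm (A z, z)" using E by simp
    also have "\<dots> \<le> norm (A z) + r * (norm (A z) + norm z)"
      using r0 norm_Pair_le[of "A z" z] by (simp add: mult_left_mono)
    also have "\<dots> = (1 + r) * (norm (A z) + norm z) - norm z" by (simp add: algebra_simps)
    also have "\<dots> \<le> c * (norm (A z) + norm z)" unfolding c_def using nup m0
      by (smt (verit) divide_nonneg_pos mult_right_mono norm_ge_zero)
    finally show "norm (A' z) \<le> c * (norm (A z) + norm z)" .
  qed
  have gap: "gap D A D A' \<le> r"
    by (rule gap_le[OF op op' cl clA' r0]) (use est in blast)+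
  have ma: "minimum_attaining D A'"
  proof (rule min_attainI[OF x0(1) x0(2)])
    show "\<And>x. x \<in> D \<Longrightarrow> m * norm x \<le> norm (A' x)" using est by blast
    have "cinner u (A x0) / nu2 = 1" using cuu nu2nz by (simp add: u_def)
    then have "A' x0 = scaleC (complex_of_real s) u"
      unfolding A'_def by (simp add: cinner_unit[OF x0(2)] scaleC_one u_def)
    then show "norm (A' x0) = m" using s0 snu by (simp add: norm_scaleC nu_def[symmetric])
  qed
  have "densely_defined_closed D A'" using op' dense clA' by (simp add: densely_defined_closed_def)
  moreover have "gap D A D A' < e" using gap c0e r_def by simp
  ultimately show ?thesis using ma by blast
qed


theorem corollary3p6:
  assumes "infinite_dimensional TYPE('a::chilbert_space)"
      and "infinite_dimensional TYPE('b::chilbert_space)"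
  shows "\<forall>(D::'a set) (A::'a \<Rightarrow> 'b). densely_defined_closed D A \<longrightarrow>
           (\<forall>e>0. \<exists>D' A'. densely_defined_closed D' A' \<and> minimum_attaining D' A' \<and>
                          gap D A D' A' < e)"
proof (intro allI impI)
  fix D :: "'a set" and A :: "'a \<Rightarrow> 'b" and e :: real
  assume ddc: "densely_defined_closed D A" and e: "e > 0"
  have op: "is_operator D A" and dense: "closure D = UNIV"
    using ddc by (auto simp: densely_defined_closed_def)
  have ex: "\<exists>x\<in>D. norm x = 1" by (rule unit_in_D[OF assms(1) op_sub[OF op] dense])
  have "min_modulus D A \<ge> 0" by (rule min_modulus_facts(1)[OF op ex])
  then consider "min_modulus D A = 0" | "min_modulus D A > 0" by linarith
  then show "\<exists>D' A'. densely_defined_closed D' A' \<and> minimum_attaining D' A' \<and> gap D A D' A' < e"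
  proof cases
    case 1 then show ?thesis using case_zero[OF ddc ex _ e] by blast
  next
    case 2 then show ?thesis using case_pos[OF ddc ex _ e] by blast
  qed
qed

end
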